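(* Assume the setting below, including A1–A4, with any step size $\alpha>0$. Let $\Psi(x)=\Phi(x)-\Phi^*+\frac{1}{2\alpha}d^2(x,\mathcal{X})$. Then for every $k\ge0$, $$\Psi(x_{k+1})\le\left(1-\frac{\alpha\beta}{1+\alpha\beta}\right)\Psi(x_k)-\frac{1}{2\alpha}\|x_{k+1}-x_k\|^2+\frac{L(\tau+1)}{2}\sum_{j=k-\tau}^{k}\|x_{j+1}-x_j\|^2 .$$
   Context: Problem: minimize $\Phi(x)=F(x)+h(x)$ over $x\in\mathbb{R}^d$, where $F(x)=\sum_{n=1}^N f_n(x)$. Assumption A1: each $f_n:\mathbb{R}^d\to\mathbb{R}$ is convex and differentiable with $\|\nabla f_n(x)-\nabla f_n(y)\|\le L_n\|x-y\|$ for all $x,y$; set $L=\sum_{n=1}^N L_n$. Assumption A2: $h:\mathbb{R}^d\to(-\infty,\infty]$ is proper, closed, convex, and $\partial h(x)\neq\emptyset$ for all $x$ in its effective domain. Assumption A3: the delays $\tau_k^n$ ($k\ge0$, $n=1,\dots,N$) are integers with $\tau_k^n\in\{0,1,\dots,\tau\}$ for a fixed nonnegative integer $\tau$ (the delay parameter). Assumption A4 (quadratic growth): the set $\mathcal{X}$ of minimizers of $\Phi$ is nonempty, $\Phi^*$ denotes the minimal value of $\Phi$, and there is $\beta>0$ with $\Phi(x)-\Phi^*\ge\frac{\beta}{2}d^2(x,\mathcal{X})$ for all $x\in\mathbb{R}^d$, where $d(x,\mathcal{X})=\inf_{y\in\mathcal{X}}\|x-y\|$. PIAG method: given $x_0\in\mathbb{R}^d$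 and step size $\alpha>0$, with the convention $x_j=x_0$ for $j<0$, for $k\ge0$ set $g_k=\sum_{n=1}^N\nabla f_n(x_{k-\tau_k^n})$ and $$x_{k+1}=\arg\min_{x\in\mathbb{R}^d}\Big\{h(x)+\langle g_k,x-x_k\rangle+\frac{1}{2\alpha}\|x-x_k\|^2\Big\}.$$ In particular $\|x_{j+1}-x_j\|=0$ for $j<0$. *)

theory Defs
  imports "HOL-Analysis.Analysis"
begin

definition proper_fun :: "('a \<Rightarrow> ereal) \<Rightarrow> bool" where
  "proper_fun h \<longleftrightarrow> (\<forall>x. h x \<noteq> -\<infinity>) \<and> (\<exists>x. h x < \<infinity>)"

definition closed_fun :: "('a::topological_space \<Rightarrow> ereal) \<Rightarrow> bool" where
  "closed_fun h \<longleftrightarrow> closed {(x, t::real). h x \<le> ereal t}"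

definition convex_fun :: "('a::real_vector \<Rightarrow> ereal) \<Rightarrow> bool" where
  "convex_fun h \<longleftrightarrow> (\<forall>x y. \<forall>t::real. 0 \<le> t \<and> t \<le> 1 \<longrightarrow>
      h ((1 - t) *\<^sub>R x + t *\<^sub>R y) \<le> ereal (1 - t) * h x + ereal t * h y)"

definition edom :: "('a \<Rightarrow> ereal) \<Rightarrow> 'a set" where
  "edom h = {x. h x < \<infinity>}"

definition subdiff :: "('a::real_inner \<Rightarrow> ereal) \<Rightarrow> 'a \<Rightarrow> 'a set" where
  "subdiff h x = {g. \<forall>y. h y \<ge> h x + ereal (inner g (y - x))}"

definition ext_seq :: "(nat \<Rightarrow> 'a) \<Rightarrow> int \<Rightarrow> 'a" where
  "ext_seq x j = (if j < 0 then x 0 else x (nat j))"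

end

theory Submission imports Defs begin


lemma grad_ineq:
  fixes f :: "'a::euclidean_space \<Rightarrow> real"
  assumes cv: "convex_on UNIV f" and d: "\<And>z. (f has_derivative (\<lambda>v. inner (G z) v)) (at z)"
  shows "f y + inner (G y) (z - y) \<le> f z"
proof -
  define v where "v = z - y"
  define \<phi> where "\<phi> = (\<lambda>t::real. f (y + t *\<^sub>R v))"
  have cphi: "convex_on UNIV \<phi>"
  proof (rule convex_onI)
    fix t a b :: real assume t: "0 < t" "t < 1" "a \<in> UNIV" "b \<in> UNIV"
    have eq: "y + ((1 - t) *\<^sub>R a + t *\<^sub>R b) *\<^sub>R v = (1 - t) *\<^sub>R (y + a *\<^sub>R v) + t *\<^sub>R (y + b *\<^sub>R v)"
      by (simp add: algebra_simps)
    show "\<phi> ((1 - t) *\<^sub>R a + t *\<^sub>R b) \<le> (1 - t) * \<phi> a + t * \<phi> b"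
      unfolding \<phi>_def eq using convex_onD[OF cv, of t "y + a *\<^sub>R v" "y + b *\<^sub>R v"] t by simp
  qed simp
  have "((\<lambda>t. y + t *\<^sub>R v) has_derivative (\<lambda>t. t *\<^sub>R v)) (at 0)"
    by (auto intro!: derivative_eq_intros)
  from has_derivative_compose[OF this d[of "y + 0 *\<^sub>R v"]]
  have "(\<phi> has_derivative (\<lambda>t. inner (G y) (t *\<^sub>R v))) (at 0)"
    by (simp add: \<phi>_def o_def)
  then have "(\<phi> has_derivative (\<lambda>t. inner (G y) v * t)) (at 0)"
    by (simp add: mult.commute)
  then have "(\<phi> has_field_derivative inner (G y) v) (at 0 within UNIV)"
    by (simp add: has_field_derivative_def)
  from convex_on_imp_above_tangent[OF cphi _ _ _ this, of 1]
  have "\<phi> 1 - \<phi> 0 \<ge> inner (G y) v" by simp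
  then show ?thesis by (simp add: \<phi>_def v_def)
qed

lemma descent:
  fixes f :: "'a::euclidean_space \<Rightarrow> real"
  assumes d: "\<And>z. (f has_derivative (\<lambda>v. inner (G z) v)) (at z)"
    and lip: "\<And>a b. norm (G a - G b) \<le> L * norm (a - b)"
  shows "f z \<le> f y + inner (G y) (z - y) + L / 2 * (norm (z - y))\<^sup>2"
proof -
  define v where "v = z - y"
  define \<psi> where "\<psi> = (\<lambda>t::real. f (y + t *\<^sub>R v) - t * inner (G y) v - L / 2 * t\<^sup>2 * (norm v)\<^sup>2)"
  have "\<psi> 1 \<le> \<psi> 0"
  proof (rule DERIV_nonpos_imp_nonincreasing[of 0 1 \<psi>])
    fix t :: real assume t: "0 \<le> t" "t \<le> 1"
    have "((\<lambda>t. y + t *\<^sub>R v) has_derivative (\<lambda>t. t *\<^sub>R v)) (at t)"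
      by (auto intro!: derivative_eq_intros)
    from has_derivative_compose[OF this d[of "y + t *\<^sub>R v"]]
    have "((\<lambda>t. f (y + t *\<^sub>R v)) has_derivative (\<lambda>s. s * inner (G (y + t *\<^sub>R v)) v)) (at t)"
      by (simp add: o_def)
    then have D1: "((\<lambda>t. f (y + t *\<^sub>R v)) has_field_derivative inner (G (y + t *\<^sub>R v)) v) (at t)"
      by (simp add: has_field_derivative_def mult_commute_abs)
    have D: "(\<psi> has_field_derivative (inner (G (y + t *\<^sub>R v)) v - inner (G y) v - L * t * (norm v)\<^sup>2)) (at t)"
      unfolding \<psi>_def
      by (rule derivative_eq_intros D1 refl | simp)+
    have "inner (G (y + t *\<^sub>R v)) v - inner (G y) v = inner (G (y + t *\<^sub>R v) - G y) v"
      by (simp add: inner_diff_left)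
    also have "\<dots> \<le> norm (G (y + t *\<^sub>R v) - G y) * norm v" by (rule norm_cauchy_schwarz)
    also have "\<dots> \<le> (L * norm (t *\<^sub>R v)) * norm v"
      using lip[of "y + t *\<^sub>R v" y] by (intro mult_right_mono) auto
    also have "\<dots> = L * t * (norm v)\<^sup>2" using t by (simp add: power2_eq_square)
    finally show "\<exists>y. DERIV \<psi> t :> y \<and> y \<le> 0" using D by auto
  qed simp
  then show ?thesis by (simp add: \<psi>_def v_def)
qed



lemma quad_id:
  fixes a b :: "'a::real_inner"
  shows "(norm ((1 - t) *\<^sub>R a + t *\<^sub>R b))\<^sup>2 = (1 - t) * (norm a)\<^sup>2 + t * (norm b)\<^sup>2 - t * (1 - t) * (norm (b - a))\<^sup>2"
  by (simp add: power2_norm_eq_inner inner_add_left inner_add_right inner_diff_left inner_diff_right inner_commute algebra_simps)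

lemma three_point:
  fixes h :: "'a::real_inner \<Rightarrow> ereal"
  assumes cv: "convex_fun h" and a: "\<alpha> > 0"
    and min: "\<And>z. h p + ereal (inner g (p - c) + 1 / (2 * \<alpha>) * (norm (p - c))\<^sup>2)
                 \<le> h z + ereal (inner g (z - c) + 1 / (2 * \<alpha>) * (norm (z - c))\<^sup>2)"
    and hp: "h p = ereal hp" and hz: "h z = ereal hz"
  shows "hp + inner g (p - c) + 1 / (2 * \<alpha>) * (norm (p - c))\<^sup>2 + 1 / (2 * \<alpha>) * (norm (z - p))\<^sup>2
         \<le> hz + inner g (z - c) + 1 / (2 * \<alpha>) * (norm (z - c))\<^sup>2"
proof -
  define q where "q = (\<lambda>z. inner g (z - c) + 1 / (2 * \<alpha>) * (norm (z - c))\<^sup>2)"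
  define N where "N = 1 / (2 * \<alpha>) * (norm (z - p))\<^sup>2"
  have N0: "N \<ge> 0" using a by (simp add: N_def)
  have quad: "q ((1 - t) *\<^sub>R p + t *\<^sub>R z) = (1 - t) * q p + t * q z - t * (1 - t) * N" for t
  proof -
    have e: "(1 - t) *\<^sub>R p + t *\<^sub>R z - c = (1 - t) *\<^sub>R (p - c) + t *\<^sub>R (z - c)"
      by (simp add: algebra_simps)
    have e2: "z - p = (z - c) - (p - c)" by simp
    show ?thesis
      unfolding q_def N_def e e2 quad_id
      apply (simp add: inner_add_right inner_diff_right algebra_simps)
      apply (simp add: add_divide_distrib[symmetric] diff_divide_distrib[symmetric])
      done
  qed
  have key: "hp + q p \<le> hz + q z - (1 - t) * N" if t: "0 < t" "t < 1" for t
  proof -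
    define zt where "zt = (1 - t) *\<^sub>R p + t *\<^sub>R z"
    have "h zt \<le> ereal (1 - t) * h p + ereal t * h z"
      using cv t unfolding convex_fun_def zt_def by auto
    also have "\<dots> = ereal ((1 - t) * hp + t * hz)" by (simp add: hp hz)
    finally have hzt: "h zt \<le> ereal ((1 - t) * hp + t * hz)" .
    have "ereal (hp + q p) = h p + ereal (q p)" by (simp add: hp)
    also have "\<dots> \<le> h zt + ereal (q zt)" using min[of zt] unfolding q_def by simp
    also have "\<dots> \<le> ereal ((1 - t) * hp + t * hz) + ereal (q zt)"
      using hzt by (rule add_right_mono)
    finally have "hp + q p \<le> (1 - t) * hp + t * hz + q zt" by simp
    then have "hp + q p \<le> (1 - t) * hp + t * hz + ((1 - t) * q p + t * q z - t * (1 - t) * N)"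
      using quad[of t] by (simp add: zt_def)
    then have "t * (hp + q p) \<le> t * (hz + q z - (1 - t) * N)" by (simp add: algebra_simps)
    then show ?thesis using t by simp
  qed
  have "hp + q p + N \<le> hz + q z"
  proof (rule ccontr)
    assume "\<not> ?thesis"
    then have \<delta>: "hp + q p + N - (hz + q z) > 0" by simp
    show False
    proof (cases "N = 0")
      case True then show ?thesis using key[of "1/2"] \<delta> by simp
    next
      case False
      then have Np: "N > 0" using N0 by simp
      define t where "t = min (1/2) ((hp + q p + N - (hz + q z)) / (2 * N))"
      have t0: "0 < t" "t < 1" using \<delta> Np by (auto simp: t_def)
      have "t * N \<le> (hp + q p + N - (hz + q z)) / (2 * N) * N"
        using Np by (intro mult_right_mono) (auto simp: t_def)
      also have "\<dots> = (hp + q p + N - (hz + q z)) / 2" using Np by simp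
      finally show False using key[OF t0] \<delta> by (simp add: algebra_simps)
    qed
  qed
  then show ?thesis by (simp add: q_def N_def)
qed

lemma telescope:
  fixes x :: "nat \<Rightarrow> 'a::real_vector"
  shows "x (Suc k) - x (k - d) = (\<Sum>j\<in>{int k - int d .. int k}. ext_seq x (j + 1) - ext_seq x j)"
proof (induction d)
  case 0
  have "{int k .. int k} = {int k}" by simp
  moreover have "nat (int k + 1) = Suc k" by simp
  ultimately show ?case by (simp add: ext_seq_def)
next
  case (Suc d)
  have split: "{int k - int (Suc d) .. int k} = insert (int k - int d - 1) {int k - int d .. int k}"
    by auto
  have "(\<Sum>j\<in>{int k - int (Suc d) .. int k}. ext_seq x (j + 1) - ext_seq x j)
      = (ext_seq x (int k - int d) - ext_seq x (int k - int d - 1)) + (x (Suc k) - x (k - d))"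
    unfolding split Suc.IH by (subst sum.insert) auto
  also have "ext_seq x (int k - int d) - ext_seq x (int k - int d - 1) = x (k - d) - x (k - Suc d)"
    by (auto simp: ext_seq_def nat_diff_distrib' intro!: arg_cong[where f=x])
  finally show ?case by simp
qed

lemma tele_bound:
  fixes x :: "nat \<Rightarrow> 'a::real_normed_vector"
  assumes "d \<le> \<tau>"
  shows "(norm (x (Suc k) - x (k - d)))\<^sup>2 \<le> (real \<tau> + 1) *
           (\<Sum>j\<in>{int k - int \<tau> .. int k}. (norm (ext_seq x (j + 1) - ext_seq x j))\<^sup>2)"
proof -
  define D where "D = (\<lambda>j. norm (ext_seq x (j + 1) - ext_seq x j))"
  define I where "I = {int k - int d .. int k}"
  have "norm (x (Suc k) - x (k - d)) \<le> (\<Sum>j\<in>I. D j)"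
    unfolding telescope I_def D_def by (rule norm_sum)
  then have "(norm (x (Suc k) - x (k - d)))\<^sup>2 \<le> (\<Sum>j\<in>I. D j)\<^sup>2"
    by (intro power_mono) auto
  also have "\<dots> \<le> (\<Sum>j\<in>I. (D j)\<^sup>2) * card I" by (rule sum_squared_le_sum_of_squares)
  also have "card I = d + 1" unfolding I_def by simp
  also have "(\<Sum>j\<in>I. (D j)\<^sup>2) * real (d + 1) \<le> (\<Sum>j\<in>{int k - int \<tau> .. int k}. (D j)\<^sup>2) * (real \<tau> + 1)"
    using assms unfolding I_def
    by (intro mult_mono sum_mono2) (auto intro: sum_nonneg)
  finally show ?thesis by (simp add: D_def mult.commute)
qed


theorem mainTheorem3:
  fixes N :: nat
    and f :: "nat \<Rightarrow> 'a::euclidean_space \<Rightarrow> real"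
    and gf :: "nat \<Rightarrow> 'a \<Rightarrow> 'a"
    and Ln :: "nat \<Rightarrow> real"
    and h :: "'a \<Rightarrow> ereal"
    and delay :: "nat \<Rightarrow> nat \<Rightarrow> nat"
    and \<tau> :: nat
    and \<alpha> \<beta> :: real
    and x :: "nat \<Rightarrow> 'a"
    and k :: nat
  assumes A1_convex: "\<And>n. n \<in> {1..N} \<Longrightarrow> convex_on UNIV (f n)"
    and A1_grad: "\<And>n z. n \<in> {1..N} \<Longrightarrow> (f n has_derivative (\<lambda>v. inner (gf n z) v)) (at z)"
    and A1_lip: "\<And>n y z. n \<in> {1..N} \<Longrightarrow> norm (gf n y - gf n z) \<le> Ln n * norm (y - z)"
    and A2_proper: "proper_fun h"
    and A2_closed: "closed_fun h"
    and A2_convex: "convex_fun h"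
    and A2_subdiff: "\<And>z. z \<in> edom h \<Longrightarrow> subdiff h z \<noteq> {}"
    and A3: "\<And>j n. n \<in> {1..N} \<Longrightarrow> delay j n \<le> \<tau>"
    and A4_nonempty: "{z. \<forall>y. (\<Sum>n=1..N. f n z) + h z \<le> (\<Sum>n=1..N. f n y) + h y} \<noteq> {}"
    and A4_qg: "\<beta> > 0"
      "\<And>z. (\<Sum>n=1..N. f n z) + h z - (INF y. (\<Sum>n=1..N. f n y) + h y)
             \<ge> ereal (\<beta> / 2 * (infdist z {w. \<forall>y. (\<Sum>n=1..N. f n w) + h w \<le> (\<Sum>n=1..N. f n y) + h y})\<^sup>2)"
    and step: "\<alpha> > 0"
    and PIAG: "\<And>j. \<forall>z. h (x (Suc j)) + ereal (inner (\<Sum>n=1..N. gf n (x (j - delay j n))) (x (Suc j) - x j)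
                          + 1 / (2 * \<alpha>) * (norm (x (Suc j) - x j))\<^sup>2)
                   \<le> h z + ereal (inner (\<Sum>n=1..N. gf n (x (j - delay j n))) (z - x j)
                          + 1 / (2 * \<alpha>) * (norm (z - x j))\<^sup>2)"
  shows "let \<Phi> = (\<lambda>z. ereal (\<Sum>n=1..N. f n z) + h z);
             \<Phi>star = (INF y. \<Phi> y);
             \<X> = {w. \<forall>y. \<Phi> w \<le> \<Phi> y};
             \<Psi> = (\<lambda>z. \<Phi> z - \<Phi>star + ereal (1 / (2 * \<alpha>) * (infdist z \<X>)\<^sup>2));
             L = (\<Sum>n=1..N. Ln n)
         in \<Psi> (x (Suc k))
            \<le> ereal (1 - \<alpha> * \<beta> / (1 + \<alpha> * \<beta>)) * \<Psi> (x k)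
               - ereal (1 / (2 * \<alpha>) * (norm (x (Suc k) - x k))\<^sup>2)
               + ereal (L * (real \<tau> + 1) / 2 *
                   (\<Sum>j\<in>{int k - int \<tau> .. int k}. (norm (ext_seq x (j + 1) - ext_seq x j))\<^sup>2))"
  
proof -
  define F where "F = (\<lambda>z. \<Sum>n=1..N. f n z)"
  define \<Phi> where "\<Phi> = (\<lambda>z. ereal (F z) + h z)"
  define X where "X = {w. \<forall>y. \<Phi> w \<le> \<Phi> y}"
  define xp where "xp = x (Suc k)"
  define xk where "xk = x k"
  define S where "S = (\<Sum>j\<in>{int k - int \<tau> .. int k}. (norm (ext_seq x (j + 1) - ext_seq x j))\<^sup>2)"
  define L where "L = (\<Sum>n=1..N. Ln n)"
  define E where "E = L * (real \<tau> + 1) / 2 * S"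
  define g where "g = (\<Sum>n=1..N. gf n (x (k - delay k n)))"
  have a: "\<alpha> > 0" by (rule step)
  have b: "\<beta> > 0" by (rule A4_qg(1))
  have hninf: "\<And>z. h z \<noteq> -\<infinity>" using A2_proper by (simp add: proper_fun_def)
  obtain y0 where y0: "h y0 < \<infinity>" using A2_proper by (auto simp: proper_fun_def)
  have XA: "{w. \<forall>y. (\<Sum>n=1..N. f n w) + h w \<le> (\<Sum>n=1..N. f n y) + h y} = X"
    by (simp add: X_def \<Phi>_def F_def sum_ereal)
  have A4': "\<And>z. \<Phi> z - (INF y. \<Phi> y) \<ge> ereal (\<beta> / 2 * (infdist z X)\<^sup>2)"
    using A4_qg(2) unfolding XA by (simp add: \<Phi>_def F_def sum_ereal)
  obtain w0 where w0: "w0 \<in> X" using A4_nonempty unfolding XA by auto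
  have "\<Phi> w0 \<le> \<Phi> y0" using w0 by (auto simp: X_def)
  also have "\<Phi> y0 < \<infinity>" using y0 by (simp add: \<Phi>_def)
  finally have "h w0 \<noteq> \<infinity>" by (auto simp: \<Phi>_def)
  then obtain hw0 where hw0: "h w0 = ereal hw0" using hninf[of w0] by (cases "h w0") auto
  define P0 where "P0 = F w0 + hw0"
  have Pw0: "\<Phi> w0 = ereal P0" by (simp add: \<Phi>_def hw0 P0_def)
  have Phistar: "(INF y. \<Phi> y) = ereal P0"
  proof (rule antisym)
    show "(INF y. \<Phi> y) \<le> ereal P0" unfolding Pw0[symmetric] by (rule INF_lower) simp
    show "ereal P0 \<le> (INF y. \<Phi> y)" unfolding Pw0[symmetric] using w0 unfolding X_def by (intro INF_greatest) blast
  qed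
  have hX: "h w = ereal (P0 - F w)" if w: "w \<in> X" for w
  proof -
    have w1: "\<Phi> w \<le> \<Phi> w0" using w unfolding X_def by blast
    have w2: "\<Phi> w0 \<le> \<Phi> w" using w0 unfolding X_def by blast
    have "\<Phi> w = ereal P0" unfolding Pw0[symmetric] using w1 w2 by (rule antisym)
    then show ?thesis using hninf[of w] by (cases "h w") (auto simp: \<Phi>_def)
  qed
  have Lnn: "Ln n \<ge> 0" if n: "n \<in> {1..N}" for n
  proof -
    define e :: 'a where "e = (SOME i. i \<in> Basis)"
    have "e \<in> Basis" unfolding e_def by (rule SOME_Basis)
    then have "e \<noteq> 0" by (rule nonzero_Basis)
    then have ne: "norm e > 0" by simp
    have l1: "norm (gf n e - gf n 0) \<le> Ln n * norm (e - 0)" by (rule A1_lip[OF n])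
    have "0 \<le> norm (gf n e - gf n 0)" by (rule norm_ge_zero)
    then have "0 \<le> Ln n * norm (e - 0)" using l1 by linarith
    then show ?thesis using ne by (simp add: zero_le_mult_iff)
  qed
  have PI: "\<And>z. h xp + ereal (inner g (xp - xk) + 1 / (2 * \<alpha>) * (norm (xp - xk))\<^sup>2)
                 \<le> h z + ereal (inner g (z - xk) + 1 / (2 * \<alpha>) * (norm (z - xk))\<^sup>2)"
    using PIAG[of k] unfolding g_def xp_def xk_def by blast
  have "h xp \<noteq> \<infinity>"
  proof
    assume "h xp = \<infinity>"
    then have "h y0 + ereal (inner g (y0 - xk) + 1 / (2 * \<alpha>) * (norm (y0 - xk))\<^sup>2) = \<infinity>"
      using PI[of y0] by simp
    then show False using y0 by simp
  qed
  then obtain hp where hp: "h xp = ereal hp" using hninf[of xp] by (cases "h xp") auto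
  have ab: "0 < \<alpha> * \<beta>" using a b by simp
  have cpos: "1 - \<alpha> * \<beta> / (1 + \<alpha> * \<beta>) > 0" using ab by (simp add: divide_less_eq)
  have T: "ereal (F xp) + h xp - (INF y. \<Phi> y) + ereal (1 / (2 * \<alpha>) * (infdist xp X)\<^sup>2)
      \<le> ereal (1 - \<alpha> * \<beta> / (1 + \<alpha> * \<beta>)) * (ereal (F xk) + h xk - (INF y. \<Phi> y) + ereal (1 / (2 * \<alpha>) * (infdist xk X)\<^sup>2))
         - ereal (1 / (2 * \<alpha>) * (norm (xp - xk))\<^sup>2) + ereal E"
  proof (cases "h xk = \<infinity>")
    case True
    have inf: "ereal (1 - \<alpha> * \<beta> / (1 + \<alpha> * \<beta>)) * (ereal (F xk) + h xk - (INF y. \<Phi> y) + ereal (1 / (2 * \<alpha>) * (infdist xk X)\<^sup>2)) = \<infinity>"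
      using True cpos by (simp add: Phistar)
    show ?thesis unfolding inf by simp
  next
    case False
    then obtain hk where hk: "h xk = ereal hk" using hninf[of xk] by (cases "h xk") auto
    have fpart: "F xp \<le> F w + inner g (xp - w) + E" for w
    proof -
      have "f n xp \<le> f n w + inner (gf n (x (k - delay k n))) (xp - w) + Ln n / 2 * ((real \<tau> + 1) * S)"
        if n: "n \<in> {1..N}" for n
      proof -
        define y where "y = x (k - delay k n)"
        have d1: "f n xp \<le> f n y + inner (gf n y) (xp - y) + Ln n / 2 * (norm (xp - y))\<^sup>2"
          by (rule descent[OF A1_grad[OF n] A1_lip[OF n]])
        have d2: "f n y + inner (gf n y) (w - y) \<le> f n w"
          by (rule grad_ineq[OF A1_convex[OF n] A1_grad[OF n]])
        have d3: "(norm (xp - y))\<^sup>2 \<le> (real \<tau> + 1) * S"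
          unfolding xp_def y_def S_def by (rule tele_bound[OF A3[OF n]])
        have d4: "Ln n / 2 * (norm (xp - y))\<^sup>2 \<le> Ln n / 2 * ((real \<tau> + 1) * S)"
          using d3 Lnn[OF n] by (intro mult_left_mono) auto
        have "inner (gf n y) (xp - y) - inner (gf n y) (w - y) = inner (gf n y) (xp - w)"
          by (simp add: inner_diff_right)
        then show ?thesis using d1 d2 d4 unfolding y_def by linarith
      qed
      then have "F xp \<le> (\<Sum>n=1..N. f n w + inner (gf n (x (k - delay k n))) (xp - w) + Ln n / 2 * ((real \<tau> + 1) * S))"
        unfolding F_def by (rule sum_mono)
      also have "\<dots> = F w + inner g (xp - w) + E"
      proof -
        have e1: "(\<Sum>n=1..N. Ln n / 2 * ((real \<tau> + 1) * S)) = (\<Sum>n=1..N. Ln n) * ((real \<tau> + 1) * S) / 2"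
          unfolding sum_distrib_right sum_divide_distrib by (rule sum.cong) auto
        have e2: "(\<Sum>n=1..N. inner (gf n (x (k - delay k n))) (xp - w)) = inner g (xp - w)"
          unfolding g_def by (rule inner_sum_left[symmetric])
        show ?thesis unfolding sum.distrib e1 e2 E_def L_def[symmetric] by (simp add: F_def)
      qed
      finally show ?thesis .
    qed
    have comb: "F xp + hp - P0 + 1 / (2 * \<alpha>) * (norm (w - xp))\<^sup>2
               \<le> 1 / (2 * \<alpha>) * (norm (w - xk))\<^sup>2 - 1 / (2 * \<alpha>) * (norm (xp - xk))\<^sup>2 + E"
      if w: "w \<in> X" for w
    proof -
      have tp: "hp + inner g (xp - xk) + 1 / (2 * \<alpha>) * (norm (xp - xk))\<^sup>2 + 1 / (2 * \<alpha>) * (norm (w - xp))\<^sup>2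
         \<le> (P0 - F w) + inner g (w - xk) + 1 / (2 * \<alpha>) * (norm (w - xk))\<^sup>2"
        by (rule three_point[where h=h and p=xp and g=g and c=xk and hp=hp and z=w and hz="P0 - F w", OF A2_convex a PI hp hX[OF w]])
      have "inner g (w - xk) - inner g (xp - xk) + inner g (xp - w) = 0"
        by (simp add: inner_diff_right)
      then show ?thesis using tp fpart[of w] by linarith
    qed
    define R where "R = F xp + hp - P0 + 1 / (2 * \<alpha>) * (infdist xp X)\<^sup>2 + 1 / (2 * \<alpha>) * (norm (xp - xk))\<^sup>2 - E"
    have Rw: "R \<le> 1 / (2 * \<alpha>) * (norm (w - xk))\<^sup>2" if w: "w \<in> X" for w
    proof -
      have "infdist xp X \<le> norm (w - xp)" using infdist_le[OF w, of xp] by (simp add: dist_norm norm_minus_commute)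
      then have "(infdist xp X)\<^sup>2 \<le> (norm (w - xp))\<^sup>2" by (intro power_mono) (auto simp: infdist_nonneg)
      then have "1 / (2 * \<alpha>) * (infdist xp X)\<^sup>2 \<le> 1 / (2 * \<alpha>) * (norm (w - xp))\<^sup>2"
        using a by (intro mult_left_mono) auto
      then show ?thesis using comb[OF w] unfolding R_def by linarith
    qed
    have Rd: "R \<le> 1 / (2 * \<alpha>) * (infdist xk X)\<^sup>2"
    proof (cases "R \<le> 0")
      case True
      have "0 \<le> 1 / (2 * \<alpha>) * (infdist xk X)\<^sup>2" using a by simp
      then show ?thesis using True by linarith
    next
      case False
      define r where "r = sqrt (2 * \<alpha> * R)"
      have R0: "0 \<le> 2 * \<alpha> * R" using False a by simp
      have r2: "r\<^sup>2 = 2 * \<alpha> * R" using R0 unfolding r_def by (rule real_sqrt_pow2)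
      have r0: "r \<ge> 0" using R0 unfolding r_def by (rule real_sqrt_ge_zero)
      have Xne: "X \<noteq> {}" using w0 by blast
      have "r \<le> dist xk w" if w: "w \<in> X" for w
      proof -
        have "2 * \<alpha> * R \<le> 2 * \<alpha> * (1 / (2 * \<alpha>) * (norm (w - xk))\<^sup>2)"
          using Rw[OF w] a by (intro mult_left_mono) auto
        also have "\<dots> = (norm (w - xk))\<^sup>2" using a by simp
        finally have "r\<^sup>2 \<le> (dist xk w)\<^sup>2" using r2 by (simp add: dist_norm norm_minus_commute)
        then show ?thesis using r0 by (simp add: power2_le_iff_abs_le)
      qed
      then have "r \<le> infdist xk X" unfolding infdist_notempty[OF Xne]
        using Xne by (intro cINF_greatest) auto
      then have "r\<^sup>2 \<le> (infdist xk X)\<^sup>2" using r0 by (intro power_mono) auto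
      then have "r\<^sup>2 / (2 * \<alpha>) \<le> (infdist xk X)\<^sup>2 / (2 * \<alpha>)" using a by (intro divide_right_mono) auto
      moreover have "r\<^sup>2 / (2 * \<alpha>) = R" using r2 a by simp
      ultimately show ?thesis by simp
    qed
    have qg: "\<beta> / 2 * (infdist xk X)\<^sup>2 \<le> F xk + hk - P0"
      using A4'[of xk] unfolding Phistar by (simp add: \<Phi>_def hk)
    define Pk where "Pk = F xk + hk - P0 + 1 / (2 * \<alpha>) * (infdist xk X)\<^sup>2"
    define A where "A = 1 / (2 * \<alpha>) * (infdist xk X)\<^sup>2"
    have eA: "(1 + \<alpha> * \<beta>) * A = A + \<beta> / 2 * (infdist xk X)\<^sup>2"
      unfolding A_def using a by (simp add: field_simps)
    have pos: "1 + \<alpha> * \<beta> > 0" using ab by simp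
    have "(1 + \<alpha> * \<beta>) * A \<le> Pk"
      unfolding eA unfolding Pk_def A_def using qg by linarith
    then have "A \<le> Pk / (1 + \<alpha> * \<beta>)" using pos by (simp add: pos_le_divide_eq mult.commute)
    moreover have ceq: "1 - \<alpha> * \<beta> / (1 + \<alpha> * \<beta>) = 1 / (1 + \<alpha> * \<beta>)"
      using pos by (simp add: field_simps)
    ultimately have dk: "1 / (2 * \<alpha>) * (infdist xk X)\<^sup>2 \<le> (1 - \<alpha> * \<beta> / (1 + \<alpha> * \<beta>)) * Pk"
      unfolding A_def by simp
    have fin: "F xp + hp - P0 + 1 / (2 * \<alpha>) * (infdist xp X)\<^sup>2
             \<le> (1 - \<alpha> * \<beta> / (1 + \<alpha> * \<beta>)) * Pk - 1 / (2 * \<alpha>) * (norm (xp - xk))\<^sup>2 + E"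
      using Rd dk unfolding R_def by linarith
    show ?thesis using fin by (simp add: Phistar hp hk Pk_def)
  qed
  then show ?thesis unfolding Let_def F_def \<Phi>_def X_def xp_def xk_def E_def L_def S_def .
qed
end
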